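(* Let $k\ge2$. Consider smoothed LocalMax-$k$-Cut on a graph $G=(V,E)$ with $n=|V|$, $m=|E|$ and maximum degree $\Delta(G)$, where the edge weights are drawn independently from distributions with densities $[-1,1]\to[0,\phi]$. Then the expected maximum number of iterations of local search under the Flip neighbourhood (over all initial partitions and all improving sequences) is $O(3^{\Delta(G)}nm^2\phi)$, with a hidden constant independent of $k$.
   Context: LocalMax-$k$-Cut: given a weighted undirected graph $G=(V,E)$ with weights $w_e$, a $k$-cut is a partition $(V_1,\dots,V_k)$ of $V$, with weight equal to the sum of weights of edges whose endpoints lie in different blocks; the Flip neighbours of a partition are those obtained by moving a single vertex from its block to another block; a solution is a partition with no neighbour of strictly larger weight. Local search repeatedly moves to a strictly better neighbour. *)

theory Defs
  imports "HOL-Probability.Probability"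
begin

definition simple_graph :: "nat set \<Rightarrow> nat set set \<Rightarrow> bool" where
  "simple_graph V E \<longleftrightarrow> finite V \<and> (\<forall>e\<in>E. e \<subseteq> V \<and> card e = 2)"

definition max_degree :: "nat set \<Rightarrow> nat set set \<Rightarrow> nat" where
  "max_degree V E = (if V = {} then 0 else Max ((\<lambda>v. card {e\<in>E. v \<in> e}) ` V))"

text \<open>A k-cut (V_1,...,V_k) is encoded by the block-index map V -> {0..<k}.\<close>
definition kpartitions :: "nat \<Rightarrow> nat set \<Rightarrow> (nat \<Rightarrow> nat) set" where
  "kpartitions k V = (V \<rightarrow>\<^sub>E {..<k})"

definition cut_edge :: "(nat \<Rightarrow> nat) \<Rightarrow> nat set \<Rightarrow> bool" where
  "cut_edge p e \<longleftrightarrow> (\<exists>u\<in>e. \<exists>v\<in>e. p u \<noteq> p v)"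

definition cut_weight :: "nat set set \<Rightarrow> (nat set \<Rightarrow> real) \<Rightarrow> (nat \<Rightarrow> nat) \<Rightarrow> real" where
  "cut_weight E w p = (\<Sum>e\<in>E. if cut_edge p e then w e else 0)"

definition flip_nbr :: "nat \<Rightarrow> nat set \<Rightarrow> (nat \<Rightarrow> nat) \<Rightarrow> (nat \<Rightarrow> nat) \<Rightarrow> bool" where
  "flip_nbr k V p q \<longleftrightarrow> (\<exists>v\<in>V. \<exists>j<k. j \<noteq> p v \<and> q = p(v := j))"

definition improving_seq ::
  "nat \<Rightarrow> nat set \<Rightarrow> nat set set \<Rightarrow> (nat set \<Rightarrow> real) \<Rightarrow> (nat \<Rightarrow> (nat \<Rightarrow> nat)) \<Rightarrow> nat \<Rightarrow> bool" where
  "improving_seq k V E w ps L \<longleftrightarrow> ps 0 \<in> kpartitions k V \<and>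
     (\<forall>i<L. flip_nbr k V (ps i) (ps (Suc i)) \<and> cut_weight E w (ps (Suc i)) > cut_weight E w (ps i))"

text \<open>Maximum number of local-search iterations over all initial partitions and all
  improving sequences (always a finite maximum, since the cut weight strictly increases
  along an improving sequence and there are finitely many partitions).\<close>
definition max_iterations :: "nat \<Rightarrow> nat set \<Rightarrow> nat set set \<Rightarrow> (nat set \<Rightarrow> real) \<Rightarrow> nat" where
  "max_iterations k V E w = Sup {L. \<exists>ps. improving_seq k V E w ps L}"

definition bounded_density :: "real \<Rightarrow> (real \<Rightarrow> real) \<Rightarrow> bool" where
  "bounded_density \<phi> f \<longleftrightarrow> f \<in> borel_measurable borel \<and>
     (\<forall>x. 0 \<le> f x \<and> f x \<le> \<phi>) \<and> (\<forall>x. x \<notin> {-1..1} \<longrightarrow> f x = 0) \<and>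
     (\<integral>\<^sup>+ x. ennreal (f x) \<partial>lborel) = 1"

definition weight_distr :: "nat set set \<Rightarrow> (nat set \<Rightarrow> real \<Rightarrow> real) \<Rightarrow> (nat set \<Rightarrow> real) measure" where
  "weight_distr E f = (\<Pi>\<^sub>M e\<in>E. density lborel (\<lambda>x. ennreal (f e x)))"

end

theory Submission
  imports Defs
begin

lemma density_prob:
  assumes "bounded_density \<phi> g"
  shows "prob_space (density lborel (\<lambda>x. ennreal (g x)))"
proof (rule prob_spaceI)
  have m: "g \<in> borel_measurable borel" using assms by (simp add: bounded_density_def)
  show "emeasure (density lborel (\<lambda>x. ennreal (g x))) (space (density lborel (\<lambda>x. ennreal (g x)))) = 1"
    using assms m by (simp add: emeasure_density bounded_density_def)
qed

lemma interval_bound: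
  fixes g :: "real \<Rightarrow> real"
  assumes gm: "g \<in> borel_measurable borel" and g0: "\<And>x. 0 \<le> g x" and gp: "\<And>x. g x \<le> \<phi>"
    and c: "c0 \<in> {-1,1}" and b: "0 \<le> b"
  shows "(\<integral>\<^sup>+ y. indicator {0<..b} (c0 * y + s) \<partial>density lborel (\<lambda>x. ennreal (g x))) \<le> ennreal (\<phi> * b)"
proof -
  have "(\<integral>\<^sup>+ y. indicator {0<..b} (c0 * y + s) \<partial>density lborel (\<lambda>x. ennreal (g x)))
      = (\<integral>\<^sup>+ y. ennreal (g y) * indicator {0<..b} (c0 * y + s) \<partial>lborel)"
    using gm by (subst nn_integral_density) auto
  also have "\<dots> \<le> (\<integral>\<^sup>+ y. ennreal \<phi> * indicator {0<..b} (c0 * y + s) \<partial>lborel)"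
    by (intro nn_integral_mono mult_right_mono) (auto simp: gp ennreal_leI)
  also have "\<dots> = ennreal \<phi> * (\<integral>\<^sup>+ y. indicator {0<..b} (c0 * y + s) \<partial>lborel)"
    by (subst nn_integral_cmult) auto
  also have "(\<integral>\<^sup>+ y. indicator {0<..b} (c0 * y + s) \<partial>lborel) = ennreal b"
  proof (cases "c0 = 1")
    case True
    have "(\<lambda>y. indicator {0<..b} (c0 * y + s) :: ennreal) = indicator {-s<..b-s}"
      using True by (auto simp: indicator_def fun_eq_iff)
    then show ?thesis using b by simp
  next
    case False
    then have c0: "c0 = -1" using c by auto
    have "(\<lambda>y. indicator {0<..b} (c0 * y + s) :: ennreal) = indicator {s-b..<s}"
      using c0 by (auto simp: indicator_def fun_eq_iff)
    then show ?thesis using b by simp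
  qed
  finally show ?thesis using b gp[of 0] g0[of 0] by (simp add: ennreal_mult)
qed


lemma comp_meas:
  assumes "\<And>i. sets (N i) = sets borel" "e \<in> I"
  shows "(\<lambda>x. x e) \<in> borel_measurable (PiM I N)"
  using measurable_component_singleton[OF assms(2), of N] measurable_cong_sets[OF refl assms(1)[of e]] by blast

lemma core:
  fixes N :: "nat set \<Rightarrow> real measure" and c :: "nat set \<Rightarrow> real"
  assumes fin: "finite E" and ee: "ee \<in> E" and c: "c ee \<in> {-1,1}"
    and Nee: "N ee = density lborel (\<lambda>x. ennreal (g x))"
    and gm: "g \<in> borel_measurable borel" and g0: "\<And>x. 0 \<le> g x" and gp: "\<And>x. g x \<le> \<phi>"
    and Pr: "\<And>i. prob_space (N i)" and sb: "\<And>i. sets (N i) = sets borel" and b: "0 \<le> b"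
  shows "(\<integral>\<^sup>+ w. indicator {0<..b} (\<Sum>e\<in>E. c e * w e) \<partial>PiM E N) \<le> ennreal (\<phi> * b)"
proof -
  interpret product_prob_space N UNIV
    using Pr by (simp add: product_prob_space_def product_prob_space_axioms_def product_sigma_finite_def prob_space_imp_sigma_finite)
  have E: "E = insert ee (E - {ee})" using ee by auto
  have X: "(\<lambda>w. \<Sum>e\<in>E. c e * w e) \<in> borel_measurable (PiM E N)"
    by (intro borel_measurable_sum borel_measurable_times borel_measurable_const comp_meas[OF sb]) auto
  have meas0: "(\<lambda>w. indicator {0<..b} (\<Sum>e\<in>E. c e * w e) :: ennreal) \<in> borel_measurable (PiM E N)"
    by (rule measurable_compose[OF X]) (simp add: borel_measurable_indicator)
  have meas: "(\<lambda>w. indicator {0<..b} (\<Sum>e\<in>E. c e * w e) :: ennreal) \<in> borel_measurable (PiM (insert ee (E - {ee})) N)"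
    using meas0 by (simp add: insert_absorb ee)
  have "(\<integral>\<^sup>+ w. indicator {0<..b} (\<Sum>e\<in>E. c e * w e) \<partial>PiM E N)
     = (\<integral>\<^sup>+ x. (\<integral>\<^sup>+ y. indicator {0<..b} (\<Sum>e\<in>E. c e * (x(ee := y)) e) \<partial>N ee) \<partial>PiM (E - {ee}) N)"
    using product_nn_integral_insert[OF _ _ meas] fin E by simp
  also have "\<dots> \<le> (\<integral>\<^sup>+ x. ennreal (\<phi> * b) \<partial>PiM (E - {ee}) N)"
  proof (rule nn_integral_mono)
    fix x
    have "(\<Sum>e\<in>E. c e * (x(ee := y)) e) = c ee * y + (\<Sum>e\<in>E - {ee}. c e * x e)" for y
      using fin ee by (simp add: sum.remove)
    then show "(\<integral>\<^sup>+ y. indicator {0<..b} (\<Sum>e\<in>E. c e * (x(ee := y)) e) \<partial>N ee) \<le> ennreal (\<phi> * b)"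
      using interval_bound[OF gm g0 gp c b] Nee by simp
  qed
  also have "\<dots> = ennreal (\<phi> * b)"
  proof -
    have "prob_space (PiM (E - {ee}) N)" by (rule prob_space_PiM) (rule Pr)
    then have "emeasure (PiM (E - {ee}) N) (space (PiM (E - {ee}) N)) = 1" by (rule prob_space.emeasure_space_1)
    then show ?thesis by simp
  qed
  finally show ?thesis .
qed


definition cind :: "(nat \<Rightarrow> nat) \<Rightarrow> nat set \<Rightarrow> real" where
  "cind p e = (if cut_edge p e then 1 else 0)"

lemma cw_alt: "cut_weight E w p = (\<Sum>e\<in>E. cind p e * w e)"
  unfolding cut_weight_def cind_def by (intro sum.cong) auto

definition Ev :: "nat set set \<Rightarrow> nat \<Rightarrow> nat set set" where
  "Ev E v = {e\<in>E. v \<in> e}"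

definition coefs :: "nat set \<Rightarrow> nat set set \<Rightarrow> (nat set \<Rightarrow> real) set" where
  "coefs V E = (\<Union>v\<in>V. (\<lambda>g e. if e \<in> Ev E v then g e else 0) ` (Ev E v \<rightarrow>\<^sub>E {-1,0,1}))"

lemma cut_edge_upd: "v \<notin> e \<Longrightarrow> cut_edge (p(v := j)) e = cut_edge p e"
  unfolding cut_edge_def by (metis fun_upd_other)

lemma gain_coef:
  assumes "flip_nbr k V p q"
  shows "\<exists>c\<in>coefs V E. cut_weight E w q - cut_weight E w p = (\<Sum>e\<in>E. c e * w e)"
proof -
  obtain v j where v: "v \<in> V" and q: "q = p(v := j)" using assms unfolding flip_nbr_def by blast
  define g where "g = restrict (\<lambda>e. cind q e - cind p e) (Ev E v)"
  define c where "c = (\<lambda>e. if e \<in> Ev E v then g e else 0)"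
  have "g \<in> Ev E v \<rightarrow>\<^sub>E {-1,0,1}" unfolding g_def cind_def by auto
  then have cC: "c \<in> coefs V E" unfolding coefs_def c_def using v by blast
  have "\<And>e. e \<in> E \<Longrightarrow> c e = cind q e - cind p e"
    unfolding c_def g_def Ev_def cind_def using q cut_edge_upd by auto
  then have "(\<Sum>e\<in>E. c e * w e) = (\<Sum>e\<in>E. (cind q e - cind p e) * w e)" by simp
  also have "\<dots> = cut_weight E w q - cut_weight E w p"
    by (simp add: cw_alt left_diff_distrib sum_subtractf)
  finally show ?thesis using cC by metis
qed

lemma diff_le:
  assumes "\<forall>e\<in>E. \<bar>w e\<bar> \<le> 1"
  shows "cut_weight E w q - cut_weight E w p \<le> real (card E)"
proof -
  have "cut_weight E w q - cut_weight E w p = (\<Sum>e\<in>E. (cind q e - cind p e) * w e)"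
    by (simp add: cw_alt left_diff_distrib sum_subtractf)
  also have "\<dots> \<le> (\<Sum>e\<in>E. 1)"
  proof (rule sum_mono)
    fix e assume "e \<in> E"
    then have "\<bar>w e\<bar> \<le> 1" using assms by auto
    then show "(cind q e - cind p e) * w e \<le> 1" unfolding cind_def by auto
  qed
  finally show ?thesis by simp
qed

lemma chain:
  assumes "improving_seq k V E w ps L" "i < j" "j \<le> L"
  shows "cut_weight E w (ps i) < cut_weight E w (ps j)"
  using assms(2,3)
proof (induction j)
  case 0 then show ?case by simp
next
  case (Suc j)
  have s: "cut_weight E w (ps j) < cut_weight E w (ps (Suc j))"
    using assms(1) Suc.prems unfolding improving_seq_def by auto
  show ?case
  proof (cases "i = j")
    case True then show ?thesis using s by simp
  next
    case False then show ?thesis using Suc s by auto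
  qed
qed

lemma len_bound:
  assumes fin: "finite E" and imp: "improving_seq k V E w ps L"
  shows "L < 2 ^ card E"
proof -
  let ?F = "\<lambda>i. {e\<in>E. cut_edge (ps i) e}"
  have cw: "cut_weight E w p = (\<Sum>e\<in>{e\<in>E. cut_edge p e}. w e)" for p
    unfolding cut_weight_def using fin by (simp add: sum.inter_filter)
  have "inj_on ?F {..L}"
  proof (rule inj_onI)
    fix i j assume i: "i \<in> {..L}" and j: "j \<in> {..L}" and eq: "?F i = ?F j"
    show "i = j"
    proof (rule ccontr)
      assume "i \<noteq> j"
      then have "i < j \<or> j < i" by auto
      then have "cut_weight E w (ps i) \<noteq> cut_weight E w (ps j)"
        using chain[OF imp] i j by fastforce
      then show False using eq cw by metis
    qed
  qed
  moreover have "?F ` {..L} \<subseteq> Pow E" by auto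
  ultimately have "card {..L} \<le> card (Pow E)"
    using fin by (metis card_inj_on_le finite_Pow_iff)
  then show ?thesis using fin by (simp add: card_Pow)
qed

lemma maxit:
  assumes fin: "finite E" and k: "0 < k"
  shows "\<exists>ps. improving_seq k V E w ps (max_iterations k V E w)"
    and "max_iterations k V E w < 2 ^ card E"
proof -
  let ?S = "{L. \<exists>ps. improving_seq k V E w ps L}"
  have sub: "?S \<subseteq> {..<2 ^ card E}" using len_bound[OF fin] by blast
  then have finS: "finite ?S" using finite_subset by blast
  have "improving_seq k V E w (\<lambda>_. restrict (\<lambda>_. 0) V) 0"
    unfolding improving_seq_def kpartitions_def using k by auto
  then have ne: "?S \<noteq> {}" by blast
  have "max_iterations k V E w \<in> ?S"
    unfolding max_iterations_def using cSup_eq_Max[OF finS ne] Max_in[OF finS ne] by simp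
  then show "\<exists>ps. improving_seq k V E w ps (max_iterations k V E w)"
    and "max_iterations k V E w < 2 ^ card E" using sub by auto
qed

lemma small_gain:
  assumes fin: "finite E" and wb: "\<forall>e\<in>E. \<bar>w e\<bar> \<le> 1"
    and imp: "improving_seq k V E w ps L" and L: "1 \<le> L"
  shows "\<exists>c\<in>coefs V E. 0 < (\<Sum>e\<in>E. c e * w e) \<and> (\<Sum>e\<in>E. c e * w e) \<le> real (card E) / real L"
proof -
  define d where "d i = cut_weight E w (ps (Suc i)) - cut_weight E w (ps i)" for i
  have dpos: "\<And>i. i < L \<Longrightarrow> 0 < d i" using imp unfolding improving_seq_def d_def by auto
  have "0 \<in> {..<L}" using L by simp
  then have ne: "d ` {..<L} \<noteq> {}" by blast
  define \<delta> where "\<delta> = Min (d ` {..<L})"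
  obtain i0 where i0: "i0 < L" "\<delta> = d i0" using Min_in[OF _ ne] unfolding \<delta>_def by auto
  have le: "\<And>i. i < L \<Longrightarrow> \<delta> \<le> d i" unfolding \<delta>_def by auto
  have "real L * \<delta> = (\<Sum>i<L. \<delta>)" by simp
  also have "\<dots> \<le> (\<Sum>i<L. d i)" by (rule sum_mono) (auto intro: le)
  also have "\<dots> = cut_weight E w (ps L) - cut_weight E w (ps 0)"
    unfolding d_def by (rule sum_lessThan_telescope)
  also have "\<dots> \<le> real (card E)" by (rule diff_le[OF wb])
  finally have "\<delta> \<le> real (card E) / real L" using L by (simp add: field_simps)
  moreover obtain c where "c \<in> coefs V E" "d i0 = (\<Sum>e\<in>E. c e * w e)"
    using gain_coef[of k V "ps i0" "ps (Suc i0)" E w] imp i0 unfolding improving_seq_def d_def by blast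
  ultimately show ?thesis using dpos[OF i0(1)] i0 by metis
qed

lemma binsum:
  fixes T :: nat
  shows "1 \<le> T \<Longrightarrow> T < 2 ^ m \<Longrightarrow> T \<le> (\<Sum>j<m. if 2 ^ j \<le> T then 2 ^ j else 0)"
proof (induction m)
  case 0 then show ?case by simp
next
  case (Suc m)
  show ?case
  proof (cases "T < 2 ^ m")
    case True
    then show ?thesis using Suc by simp
  next
    case False
    have "(\<Sum>j<m. if 2 ^ j \<le> T then 2 ^ j else 0) = (\<Sum>j<m. (2::nat) ^ j)"
    proof (rule sum.cong)
      fix j assume "j \<in> {..<m}"
      then have "(2::nat) ^ j \<le> 2 ^ m" by (simp add: power_increasing)
      then have "(2::nat) ^ j \<le> T" using False by linarith
      then show "(if 2 ^ j \<le> T then 2 ^ j else 0) = (2::nat) ^ j" by simp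
    qed simp
    also have "\<dots> = 2 ^ m - 1" by (induction m) auto
    finally show ?thesis using False Suc.prems by simp
  qed
qed


lemma coefs_vals: "c \<in> coefs V E \<Longrightarrow> c e \<in> {-1,0,1}"
proof -
  assume "c \<in> coefs V E"
  then obtain v g where g: "g \<in> Ev E v \<rightarrow>\<^sub>E {-1,0,1}" and c: "c = (\<lambda>e. if e \<in> Ev E v then g e else 0)"
    unfolding coefs_def by blast
  show ?thesis
  proof (cases "e \<in> Ev E v")
    case True then have "g e \<in> {-1,0,1}" using g by (simp add: PiE_iff)
    then show ?thesis using c True by simp
  qed (simp add: c)
qed

lemma simple_finE: "simple_graph V E \<Longrightarrow> finite E"
  unfolding simple_graph_def by (meson PowI finite_Pow_iff finite_subset subsetI)

lemma coefs_finite: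
  assumes "simple_graph V E" shows "finite (coefs V E)"
proof -
  have "finite V" "finite E" using assms simple_finE unfolding simple_graph_def by auto
  moreover have "finite (Ev E v)" for v using \<open>finite E\<close> unfolding Ev_def by auto
  ultimately show ?thesis unfolding coefs_def by (auto intro!: finite_PiE)
qed

lemma coefs_card:
  assumes sg: "simple_graph V E" shows "card (coefs V E) \<le> card V * 3 ^ max_degree V E"
proof -
  have fV: "finite V" using sg unfolding simple_graph_def by auto
  have fE: "finite E" using simple_finE[OF sg] .
  have fEv: "finite (Ev E v)" for v using fE unfolding Ev_def by auto
  have "card (coefs V E) \<le> (\<Sum>v\<in>V. card ((\<lambda>g e. if e \<in> Ev E v then g e else 0) ` (Ev E v \<rightarrow>\<^sub>E {-1,0,1::real})))"
    unfolding coefs_def by (rule card_UN_le[OF fV])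
  also have "\<dots> \<le> (\<Sum>v\<in>V. 3 ^ max_degree V E)"
  proof (rule sum_mono)
    fix v assume v: "v \<in> V"
    have "card ((\<lambda>g e. if e \<in> Ev E v then g e else 0) ` (Ev E v \<rightarrow>\<^sub>E {-1,0,1::real}))
       \<le> card (Ev E v \<rightarrow>\<^sub>E {-1,0,1::real})" by (rule card_image_le) (simp add: fEv finite_PiE)
    also have "\<dots> = 3 ^ card (Ev E v)" by (simp add: card_PiE fEv numeral_3_eq_3)
    also have "card (Ev E v) \<le> max_degree V E"
      unfolding max_degree_def Ev_def using v fV by (auto intro!: Max_ge)
    then have "(3::nat) ^ card (Ev E v) \<le> 3 ^ max_degree V E" by (simp add: power_increasing)
    finally show "card ((\<lambda>g e. if e \<in> Ev E v then g e else 0) ` (Ev E v \<rightarrow>\<^sub>E {-1,0,1::real})) \<le> 3 ^ max_degree V E" .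
  qed
  finally show ?thesis by simp
qed

lemma pointwise:
  assumes sg: "simple_graph V E" and k: "0 < k" and wb: "\<forall>e\<in>E. \<bar>w e\<bar> \<le> 1"
  shows "real (max_iterations k V E w) \<le>
    (\<Sum>c\<in>coefs V E. \<Sum>j<card E. 2 ^ j * indicator {0<..real (card E) / 2 ^ j} (\<Sum>e\<in>E. c e * w e))"
  (is "_ \<le> (\<Sum>c\<in>_. ?h c)")
proof -
  have fE: "finite E" using simple_finE[OF sg] .
  have fC: "finite (coefs V E)" using coefs_finite[OF sg] .
  have hnn: "0 \<le> ?h c" for c by (intro sum_nonneg) auto
  define T where "T = max_iterations k V E w"
  show ?thesis
  proof (cases "T = 0")
    case True then show ?thesis unfolding T_def[symmetric] by (simp add: sum_nonneg hnn)
  next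
    case False
    obtain ps where ps: "improving_seq k V E w ps T" using maxit(1)[OF fE k] unfolding T_def by blast
    have Tlt: "T < 2 ^ card E" using maxit(2)[OF fE k] unfolding T_def by blast
    obtain c0 where c0: "c0 \<in> coefs V E" "0 < (\<Sum>e\<in>E. c0 e * w e)" "(\<Sum>e\<in>E. c0 e * w e) \<le> real (card E) / real T"
      using small_gain[OF fE wb ps] False by auto
    have "T \<le> (\<Sum>j<card E. if 2 ^ j \<le> T then 2 ^ j else 0)"
      using binsum[of T "card E"] False Tlt by simp
    then have "real T \<le> real (\<Sum>j<card E. if 2 ^ j \<le> T then 2 ^ j else 0)"
      by (simp only: of_nat_le_iff)
    also have "\<dots> = (\<Sum>j<card E. real (if 2 ^ j \<le> T then 2 ^ j else 0))"
      by (rule of_nat_sum)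
    also have "\<dots> = (\<Sum>j<card E. if 2 ^ j \<le> T then 2 ^ j else 0 :: real)"
      by (rule sum.cong) auto
    also have "\<dots> \<le> ?h c0"
    proof (rule sum_mono)
      fix j assume "j \<in> {..<card E}"
      show "(if 2 ^ j \<le> T then 2 ^ j else 0 :: real) \<le> 2 ^ j * indicator {0<..real (card E) / 2 ^ j} (\<Sum>e\<in>E. c0 e * w e)"
      proof (cases "2 ^ j \<le> T")
        case True
        then have "real (2 ^ j) \<le> real T" by linarith
        then have "real (card E) / real T \<le> real (card E) / 2 ^ j"
          using False by (intro divide_left_mono) auto
        then show ?thesis using True c0 by (simp add: indicator_def)
      qed simp
    qed
    also have "\<dots> \<le> (\<Sum>c\<in>coefs V E. ?h c)"
      by (rule member_le_sum[OF c0(1) _ fC]) (rule hnn)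
    finally show ?thesis unfolding T_def .
  qed
qed


lemma X_meas:
  fixes N :: "nat set \<Rightarrow> real measure" and c :: "nat set \<Rightarrow> real"
  assumes "\<And>i. sets (N i) = sets borel"
  shows "(\<lambda>w. \<Sum>e\<in>E. c e * w e) \<in> borel_measurable (PiM E N)"
  by (intro borel_measurable_sum borel_measurable_times borel_measurable_const comp_meas[OF assms]) auto

lemma prob_bound:
  fixes N :: "nat set \<Rightarrow> real measure"
  assumes sg: "simple_graph V E" and c: "c \<in> coefs V E"
    and Ne: "\<And>e. e \<in> E \<Longrightarrow> N e = density lborel (\<lambda>x. ennreal (f e x))"
    and bd: "\<forall>e\<in>E. bounded_density \<phi> (f e)"
    and Pr: "\<And>i. prob_space (N i)" and sb: "\<And>i. sets (N i) = sets borel" and b: "0 \<le> b"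
  shows "(\<integral>\<^sup>+ w. indicator {0<..b} (\<Sum>e\<in>E. c e * w e) \<partial>PiM E N) \<le> ennreal (\<phi> * b)"
proof (cases "\<exists>e0\<in>E. c e0 \<noteq> 0")
  case True
  then obtain e0 where e0: "e0 \<in> E" "c e0 \<noteq> 0" by blast
  then have ce: "c e0 \<in> {-1,1}" using coefs_vals[OF c, of e0] by auto
  have b0: "bounded_density \<phi> (f e0)" using bd e0 by auto
  have gm: "f e0 \<in> borel_measurable borel" and g0: "\<And>x. 0 \<le> f e0 x" and gp: "\<And>x. f e0 x \<le> \<phi>"
    using b0 unfolding bounded_density_def by auto
  show ?thesis
    using simple_finE[OF sg] e0(1) ce Ne[OF e0(1)] gm g0 gp Pr sb b
    by (rule core[where E=E and ee=e0 and c=c and N=N and g="f e0" and \<phi>=\<phi> and b=b])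
next
  case False
  then have "(\<lambda>w. indicator {0<..b} (\<Sum>e\<in>E. c e * w e) :: ennreal) = (\<lambda>w. 0)" by auto
  then show ?thesis by simp
qed

theorem mainTheorem12:
  shows "\<exists>C>0. \<forall>(k::nat) (V::nat set) (E::nat set set) (\<phi>::real) (f::nat set \<Rightarrow> real \<Rightarrow> real).
     k \<ge> 2 \<longrightarrow> simple_graph V E \<longrightarrow> (\<forall>e\<in>E. bounded_density \<phi> (f e)) \<longrightarrow>
     (\<integral>\<^sup>+ w. ennreal (real (max_iterations k V E w)) \<partial>(weight_distr E f))
       \<le> ennreal (C * 3 ^ max_degree V E * real (card V) * real (card E) ^ 2 * \<phi>)"
proof (intro exI[of _ 1] conjI allI impI)
  fix k :: nat and V :: "nat set" and E :: "nat set set" and \<phi> :: real and f :: "nat set \<Rightarrow> real \<Rightarrow> real"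
  assume k2: "2 \<le> k" and sg: "simple_graph V E" and bd: "\<forall>e\<in>E. bounded_density \<phi> (f e)"
  have k: "0 < k" using k2 by simp
  have fE: "finite E" using simple_finE[OF sg] .
  define N where "N e = (if e \<in> E then density lborel (\<lambda>x. ennreal (f e x)) else return borel 0)" for e
  have M: "weight_distr E f = PiM E N" unfolding weight_distr_def N_def by (rule PiM_cong) auto
  have Pr: "prob_space (N i)" for i
    using bd density_prob prob_space_return[of 0 borel] unfolding N_def by auto
  have sb: "sets (N i) = sets borel" for i unfolding N_def by auto
  have Ne: "\<And>e. e \<in> E \<Longrightarrow> N e = density lborel (\<lambda>x. ennreal (f e x))" unfolding N_def by simp
  let ?m = "card E"
  let ?X = "\<lambda>c w. \<Sum>e\<in>E. c e * w e"
  let ?G = "\<lambda>w. (\<Sum>c\<in>coefs V E. \<Sum>j<?m. ennreal (2 ^ j) * indicator {0<..real ?m / 2 ^ j} (?X c w))"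
  have AE: "AE w in PiM E N. \<forall>e\<in>E. \<bar>w e\<bar> \<le> 1"
  proof (rule eventually_ball_finite[OF fE], intro ballI)
    fix e assume e: "e \<in> E"
    have fm: "(\<lambda>x. ennreal (f e x)) \<in> borel_measurable lborel"
      using bd e unfolding bounded_density_def by auto
    have z: "\<And>x. x \<notin> {-1..1} \<Longrightarrow> f e x = 0" using bd e unfolding bounded_density_def by blast
    have "0 < f e x \<longrightarrow> \<bar>x\<bar> \<le> 1" for x
    proof (cases "x \<in> {-1..1}")
      case True then show ?thesis by (auto simp: abs_le_iff)
    next
      case False then show ?thesis using z[OF False] by simp
    qed
    then have "AE x in N e. \<bar>x\<bar> \<le> 1"
      unfolding Ne[OF e] AE_density[OF fm] by (intro AE_I2) auto
    then show "AE w in PiM E N. \<bar>w e\<bar> \<le> 1" by (rule AE_PiM_component[OF Pr e])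
  qed
  have "(\<integral>\<^sup>+ w. ennreal (real (max_iterations k V E w)) \<partial>PiM E N) \<le> (\<integral>\<^sup>+ w. ?G w \<partial>PiM E N)"
  proof (rule nn_integral_mono_AE)
    show "AE w in PiM E N. ennreal (real (max_iterations k V E w)) \<le> ?G w"
      using AE
    proof eventually_elim
      case (elim w)
      have "ennreal (real (max_iterations k V E w)) \<le> ennreal (\<Sum>c\<in>coefs V E. \<Sum>j<?m. 2 ^ j * indicator {0<..real ?m / 2 ^ j} (?X c w))"
        by (rule ennreal_leI) (rule pointwise[OF sg k elim])
      also have "\<dots> = ?G w"
        by (simp add: sum_nonneg ennreal_mult indicator_def if_distrib cong: if_cong)
      finally show ?case .
    qed
  qed
  also have "(\<integral>\<^sup>+ w. ?G w \<partial>PiM E N) = (\<Sum>c\<in>coefs V E. \<Sum>j<?m. ennreal (2 ^ j) * (\<integral>\<^sup>+ w. indicator {0<..real ?m / 2 ^ j} (?X c w) \<partial>PiM E N))"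
  proof -
    have im[measurable]: "(\<lambda>w. indicator {0<..real ?m / 2 ^ j} (?X c w) :: ennreal) \<in> borel_measurable (PiM E N)" for c j
      by (rule measurable_compose[OF X_meas[OF sb]]) (simp add: borel_measurable_indicator)
    have "(\<integral>\<^sup>+ w. ?G w \<partial>PiM E N) = (\<Sum>c\<in>coefs V E. \<integral>\<^sup>+ w. (\<Sum>j<?m. ennreal (2 ^ j) * indicator {0<..real ?m / 2 ^ j} (?X c w)) \<partial>PiM E N)"
      by (rule nn_integral_sum) measurable
    also have "\<dots> = (\<Sum>c\<in>coefs V E. \<Sum>j<?m. \<integral>\<^sup>+ w. ennreal (2 ^ j) * indicator {0<..real ?m / 2 ^ j} (?X c w) \<partial>PiM E N)"
      by (intro sum.cong refl nn_integral_sum) measurable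
    also have "\<dots> = (\<Sum>c\<in>coefs V E. \<Sum>j<?m. ennreal (2 ^ j) * (\<integral>\<^sup>+ w. indicator {0<..real ?m / 2 ^ j} (?X c w) \<partial>PiM E N))"
      by (intro sum.cong refl nn_integral_cmult im)
    finally show ?thesis .
  qed
  also have "\<dots> \<le> (\<Sum>c\<in>coefs V E. \<Sum>j<?m. ennreal (2 ^ j) * ennreal (\<phi> * (real ?m / 2 ^ j)))"
    by (intro sum_mono mult_left_mono prob_bound[OF sg _ Ne bd Pr sb]) auto
  also have "\<dots> \<le> ennreal (1 * 3 ^ max_degree V E * real (card V) * real (card E) ^ 2 * \<phi>)"
  proof (cases "E = {}")
    case True then show ?thesis by simp
  next
    case False
    then obtain e where "e \<in> E" by blast
    then have \<phi>0: "0 \<le> \<phi>" using bd unfolding bounded_density_def by (meson order.trans)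
    have "(\<Sum>c\<in>coefs V E. \<Sum>j<?m. ennreal (2 ^ j) * ennreal (\<phi> * (real ?m / 2 ^ j)))
        = (\<Sum>c\<in>coefs V E. \<Sum>j<?m. ennreal (\<phi> * real ?m))"
      using \<phi>0 by (intro sum.cong refl) (simp add: ennreal_mult[symmetric])
    also have "\<dots> = ennreal (real (card (coefs V E)) * real ?m * (\<phi> * real ?m))"
      using \<phi>0 by (simp add: ennreal_mult ennreal_of_nat_eq_real_of_nat mult.assoc)
    also have "\<dots> \<le> ennreal (1 * 3 ^ max_degree V E * real (card V) * real (card E) ^ 2 * \<phi>)"
    proof (rule ennreal_leI)
      have "real (card (coefs V E)) \<le> real (card V) * 3 ^ max_degree V E"
        using coefs_card[OF sg] by (metis of_nat_le_iff of_nat_mult of_nat_numeral of_nat_power)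
      then have "real (card (coefs V E)) * (real ?m * \<phi> * real ?m) \<le> real (card V) * 3 ^ max_degree V E * (real ?m * \<phi> * real ?m)"
        using \<phi>0 by (intro mult_right_mono) auto
      then show "real (card (coefs V E)) * real ?m * (\<phi> * real ?m) \<le> 1 * 3 ^ max_degree V E * real (card V) * real (card E) ^ 2 * \<phi>"
        by (simp add: power2_eq_square algebra_simps)
    qed
    finally show ?thesis .
  qed
  finally show "(\<integral>\<^sup>+ w. ennreal (real (max_iterations k V E w)) \<partial>(weight_distr E f))
       \<le> ennreal (1 * 3 ^ max_degree V E * real (card V) * real (card E) ^ 2 * \<phi>)"
    unfolding M .
qed (simp)

end
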